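(* Let $G=(V,E)$ be an undirected graph (finite or infinite), $\widehat A$ a color class of $G$, and $X$ a partitive set of $G$ with $X\subsetneq\widetilde A$. Then there exists $a\in\widetilde A\setminus X$ such that $(a,x)\in\widehat A$ for every $x\in X$.
   Context: A graph $G=(V,E)$ has vertex set $V$ and edge set $E\subseteq V^2$; it is undirected if $E$ is irreflexive and symmetric. A set $X\subseteq V$ is a partitive set of $G$ if for all $a,b\in X$ and $c\in V\setminus X$: $(a,c)\in E\Leftrightarrow(b,c)\in E$ and $(c,a)\in E\Leftrightarrow(c,b)\in E$. Implication classes: on $E$ define $(a,b)\Gamma(a',b')$ iff either $a=a'$ and $(b,b')\notin E$, or $b=b'$ and $(a,a')\notin E$; the classes of the transitive closure $\Gamma^*$ are the implication classes. For an implication class $A$, $A^{-1}=\{(b,a):(a,b)\in A\}$ and the color class is $\widehat A=A\cup A^{-1}$. $\widetilde A$ denotes the set of vertices spanned by $\widehat A$ (vertices $a$ with $(a,b)\in\widehat A$ for some $b$). *)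

theory Defs
  imports Main
begin

definition graph :: "'a set \<Rightarrow> ('a \<times> 'a) set \<Rightarrow> bool" where
  "graph V E \<longleftrightarrow> E \<subseteq> V \<times> V"

definition undirected_graph :: "'a set \<Rightarrow> ('a \<times> 'a) set \<Rightarrow> bool" where
  "undirected_graph V E \<longleftrightarrow> graph V E \<and> irrefl E \<and> sym E"

definition partitive :: "'a set \<Rightarrow> ('a \<times> 'a) set \<Rightarrow> 'a set \<Rightarrow> bool" where
  "partitive V E X \<longleftrightarrow> X \<subseteq> V \<and>
     (\<forall>a\<in>X. \<forall>b\<in>X. \<forall>c\<in>V - X.
        ((a, c) \<in> E \<longleftrightarrow> (b, c) \<in> E) \<and> ((c, a) \<in> E \<longleftrightarrow> (c, b) \<in> E))"

definition Gamma :: "('a \<times> 'a) set \<Rightarrow> (('a \<times> 'a) \<times> ('a \<times> 'a)) set" where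
  "Gamma E = {((a, b), (a', b')). (a, b) \<in> E \<and> (a', b') \<in> E \<and>
      ((a = a' \<and> (b, b') \<notin> E) \<or> (b = b' \<and> (a, a') \<notin> E))}"

definition implication_class :: "('a \<times> 'a) set \<Rightarrow> ('a \<times> 'a) set \<Rightarrow> bool" where
  "implication_class E A \<longleftrightarrow> (\<exists>e\<in>E. A = (Gamma E)\<^sup>* `` {e})"

definition color_class :: "('a \<times> 'a) set \<Rightarrow> ('a \<times> 'a) set" where
  "color_class A = A \<union> A\<inverse>"

definition spanned :: "('a \<times> 'a) set \<Rightarrow> 'a set" where
  "spanned A = {a. \<exists>b. (a, b) \<in> color_class A}"

end

theory Submission
  imports Defs
begin

lemma gamma_sym: "sym E \<Longrightarrow> sym (Gamma E)"
  unfolding sym_def Gamma_def by blast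

lemma gamma_swap: "sym E \<Longrightarrow> ((a,b),(a',b')) \<in> Gamma E \<Longrightarrow> ((b,a),(b',a')) \<in> Gamma E"
  unfolding sym_def Gamma_def by blast

lemma gamma_E: "(e,f) \<in> Gamma E \<Longrightarrow> e \<in> E \<and> f \<in> E"
  unfolding Gamma_def by auto

theorem proposition3p2:
  fixes V X :: "'a set" and E A :: "('a \<times> 'a) set"
  assumes "undirected_graph V E"
    and "implication_class E A"
    and "partitive V E X"
    and "X \<subset> spanned A"
  shows "\<exists>a \<in> spanned A - X. \<forall>x\<in>X. (a, x) \<in> color_class A"
proof -
  from assms(1) have EV: "E \<subseteq> V \<times> V" and sE: "sym E"
    by (auto simp: undirected_graph_def graph_def)
  have sE': "\<And>a b. (a,b) \<in> E \<Longrightarrow> (b,a) \<in> E" using sE by (auto simp: sym_def)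
  from assms(2) obtain e0 where e0: "e0 \<in> E" "A = (Gamma E)\<^sup>* `` {e0}"
    by (auto simp: implication_class_def)
  define S where "S = color_class A"
  have modX: "\<And>a b c. a\<in>X \<Longrightarrow> b\<in>X \<Longrightarrow> c\<in>V \<Longrightarrow> c\<notin>X \<Longrightarrow> ((a,c)\<in>E \<longleftrightarrow> (b,c)\<in>E)"
    using assms(3) unfolding partitive_def by blast
  have XV: "X \<subseteq> V" using assms(3) unfolding partitive_def by blast
  have symG: "sym ((Gamma E)\<^sup>*)" using gamma_sym[OF sE] sym_rtrancl by blast
  have AA: "\<And>e f. e\<in>A \<Longrightarrow> f\<in>A \<Longrightarrow> (e,f) \<in> (Gamma E)\<^sup>*"
  proof -
    fix e f assume "e\<in>A" "f\<in>A"
    then have "(e0,e) \<in> (Gamma E)\<^sup>*" "(e0,f) \<in> (Gamma E)\<^sup>*" using e0 by auto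
    then have "(e,e0) \<in> (Gamma E)\<^sup>*" using symG by (meson symD)
    then show "(e,f) \<in> (Gamma E)\<^sup>*" using \<open>(e0,f) \<in> _\<close> by (rule rtrancl_trans)
  qed
  have Aclosed: "\<And>e f. e\<in>A \<Longrightarrow> (e,f)\<in>Gamma E \<Longrightarrow> f\<in>A"
    using e0 rtrancl_into_rtrancl by fastforce
  have AE: "A \<subseteq> E"
  proof
    fix f assume "f \<in> A"
    then have "(e0,f) \<in> (Gamma E)\<^sup>*" using e0 by auto
    then show "f \<in> E"
      by (induction rule: rtrancl_induct) (use e0 gamma_E in blast)+
  qed
  have Sclosed: "\<And>a b a' b'. (a,b)\<in>S \<Longrightarrow> ((a,b),(a',b'))\<in>Gamma E \<Longrightarrow> (a',b')\<in>S"
  proof -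
    fix a b a' b' assume h: "(a,b)\<in>S" "((a,b),(a',b'))\<in>Gamma E"
    show "(a',b')\<in>S"
    proof (cases "(a,b) \<in> A")
      case True then show ?thesis using Aclosed h by (auto simp: S_def color_class_def)
    next
      case False
      then have "(b,a) \<in> A" using h by (auto simp: S_def color_class_def)
      moreover have "((b,a),(b',a'))\<in>Gamma E" using gamma_swap[OF sE h(2)] .
      ultimately have "(b',a') \<in> A" using Aclosed by blast
      then show ?thesis by (auto simp: S_def color_class_def)
    qed
  qed
  have SE: "\<And>a b. (a,b)\<in>S \<Longrightarrow> (a,b)\<in>E" using AE sE' by (auto simp: S_def color_class_def)
  have Ssym: "\<And>a b. (a,b)\<in>S \<Longrightarrow> (b,a)\<in>S" by (auto simp: S_def color_class_def)
  have span: "spanned A = Domain S" by (auto simp: spanned_def S_def)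
  have noin: "\<And>p q. (p,q)\<in>S \<Longrightarrow> p\<in>X \<Longrightarrow> q\<in>X \<Longrightarrow> False"
  proof -
    fix p q assume pq: "(p,q)\<in>S" "p\<in>X" "q\<in>X"
    obtain e where e: "e \<in> A" "fst e \<in> X" "snd e \<in> X"
      using pq by (auto simp: S_def color_class_def)
    have all: "\<forall>f\<in>A. fst f \<in> X \<and> snd f \<in> X"
    proof
      fix f assume "f \<in> A"
      with e have "(e,f) \<in> (Gamma E)\<^sup>*" using AA by blast
      then show "fst f \<in> X \<and> snd f \<in> X"
      proof (induction rule: rtrancl_induct)
        case base then show ?case using e by auto
      next
        case (step y z)
        obtain a b where y: "y = (a,b)" by (cases y)
        obtain a' b' where z: "z = (a',b')" by (cases z)
        have ab: "a \<in> X" "b \<in> X" using step y by auto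
        have g: "(a,b)\<in>E" "(a',b')\<in>E" "(a = a' \<and> (b, b') \<notin> E) \<or> (b = b' \<and> (a, a') \<notin> E)"
          using step(2) y z by (auto simp: Gamma_def)
        have "a' \<in> V" "b' \<in> V" using g EV by auto
        from g(3) show ?case
        proof
          assume c: "a = a' \<and> (b, b') \<notin> E"
          have "b' \<in> X"
          proof (rule ccontr)
            assume "b' \<notin> X"
            then show False using modX[OF ab \<open>b' \<in> V\<close>] c g by auto
          qed
          then show ?thesis using c ab z by auto
        next
          assume c: "b = b' \<and> (a, a') \<notin> E"
          have "a' \<in> X"
          proof (rule ccontr)
            assume "a' \<notin> X"
            then show False using modX[OF ab \<open>a' \<in> V\<close>] c g sE' by blast
          qed
          then show ?thesis using c ab z by auto
        qed
      qed
    qed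
    have "Domain S \<subseteq> X" using all by (force simp: S_def color_class_def)
    then show False using assms(4) span by auto
  qed
  show ?thesis
  proof (cases "X = {}")
    case True
    then show ?thesis using assms(4) by auto
  next
    case False
    then obtain x0 where x0: "x0 \<in> X" by auto
    then have "x0 \<in> Domain S" using assms(4) span by auto
    then obtain b where b: "(x0,b) \<in> S" by auto
    have bX: "b \<notin> X" using noin b x0 by blast
    have bV: "b \<in> V" using SE[OF b] EV by auto
    have bW: "\<And>x. x\<in>X \<Longrightarrow> (x,b)\<in>E" using modX[OF x0 _ bV bX] SE[OF b] by blast
    have good: "\<exists>w. w \<notin> X \<and> (\<forall>x\<in>X. (w,x)\<in>S)"
    proof (rule ccontr)
      assume nG: "\<not> (\<exists>w. w \<notin> X \<and> (\<forall>x\<in>X. (w,x)\<in>S))"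
      define Inv where "Inv f \<longleftrightarrow> f\<in>S \<and> (fst f\<in>X \<longrightarrow> (fst f,b)\<in>S) \<and> (snd f\<in>X \<longrightarrow> (snd f,b)\<in>S)" for f
      have step: "Inv g" if "Inv f" "(f,g)\<in>Gamma E" for f g
      proof -
        obtain u v where f: "f = (u,v)" by (cases f)
        obtain u' v' where gg: "g = (u',v')" by (cases g)
        have fS: "(u,v) \<in> S" and i1: "u\<in>X \<Longrightarrow> (u,b)\<in>S" and i2: "v\<in>X \<Longrightarrow> (v,b)\<in>S"
          using that(1) f by (auto simp: Inv_def)
        have gS: "(u',v') \<in> S" using Sclosed[OF fS] that(2) f gg by auto
        have g: "(u,v)\<in>E" "(u',v')\<in>E" "(u = u' \<and> (v, v') \<notin> E) \<or> (v = v' \<and> (u, u') \<notin> E)"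
          using that(2) f gg by (auto simp: Gamma_def)
        have V: "u \<in> V" "v \<in> V" "u' \<in> V" "v' \<in> V" using g EV by auto
        from g(3) show ?thesis
        proof
          assume c: "u = u' \<and> (v, v') \<notin> E"
          have "(v',b)\<in>S" if v'X: "v'\<in>X"
          proof (cases "v \<in> X")
            case True
            have "((v,b),(v',b)) \<in> Gamma E"
              using SE[OF i2[OF True]] bW[OF v'X] c by (auto simp: Gamma_def)
            then show ?thesis using Sclosed i2 True by blast
          next
            case vX: False
            have uX: "u \<notin> X" using noin gS c v'X by blast
            have "(u,x) \<in> S" if xX: "x \<in> X" for x
            proof -
              have "(v',u) \<in> E" using g c sE' by auto
              then have ux: "(u,x) \<in> E" using modX[OF v'X xX V(1) uX] sE' by blast
              have "(x,v) \<notin> E" using modX[OF v'X xX V(2) vX] c sE' by blast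
              then have "(v,x) \<notin> E" using sE' by blast
              then have "((u,v),(u,x)) \<in> Gamma E" using g ux by (auto simp: Gamma_def)
              then show ?thesis using Sclosed fS by blast
            qed
            then show ?thesis using nG uX by blast
          qed
          then show ?thesis using gS i1 c gg by (auto simp: Inv_def)
        next
          assume c: "v = v' \<and> (u, u') \<notin> E"
          have "(u',b)\<in>S" if u'X: "u'\<in>X"
          proof (cases "u \<in> X")
            case True
            have "((u,b),(u',b)) \<in> Gamma E"
              using SE[OF i1[OF True]] bW[OF u'X] c by (auto simp: Gamma_def)
            then show ?thesis using Sclosed i1 True by blast
          next
            case uX: False
            have vX: "v \<notin> X" using noin gS c u'X by blast
            have "(v,x) \<in> S" if xX: "x \<in> X" for x
            proof -
              have "(u',v) \<in> E" using g c by auto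
              then have vx: "(x,v) \<in> E" using modX[OF u'X xX V(2) vX] by blast
              have "(x,u) \<notin> E" using modX[OF u'X xX V(1) uX] c sE' by blast
              then have "(u,x) \<notin> E" using sE' by blast
              then have "((u,v),(x,v)) \<in> Gamma E" using g vx by (auto simp: Gamma_def)
              then show ?thesis using Sclosed fS Ssym by blast
            qed
            then show ?thesis using nG vX by blast
          qed
          then show ?thesis using gS i2 c gg by (auto simp: Inv_def)
        qed
      qed
      have reach: "Inv f" if "Inv e" "(e,f) \<in> (Gamma E)\<^sup>*" for e f
        using that(2,1) by (induction rule: rtrancl_induct) (auto intro: step)
      obtain e1 where e1: "e1 \<in> A" "Inv e1"
      proof (cases "(x0,b) \<in> A")
        case True
        then show ?thesis using that b bX by (auto simp: Inv_def)
      next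
        case False
        then have "(b,x0) \<in> A" using b by (auto simp: S_def color_class_def)
        then show ?thesis using that b bX Ssym by (auto simp: Inv_def)
      qed
      have "(x,b) \<in> S" if xX: "x \<in> X" for x
      proof -
        have "x \<in> Domain S" using xX assms(4) span by auto
        then obtain c where "(x,c) \<in> S" by auto
        then obtain e2 where e2: "e2 \<in> A" "e2 = (x,c) \<or> e2 = (c,x)"
          by (auto simp: S_def color_class_def)
        have "Inv e2" using reach[OF e1(2) AA[OF e1(1) e2(1)]] .
        then show ?thesis using e2(2) xX by (auto simp: Inv_def)
      qed
      then show False using nG bX Ssym by blast
    qed
    then obtain w where w: "w \<notin> X" "\<forall>x\<in>X. (w,x)\<in>S" by blast
    then have "w \<in> spanned A" using x0 span by auto
    then show ?thesis using w by (auto simp: S_def)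
  qed
qed

end
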